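(* Let $n\ge 2$, let $A_1,\dots,A_n$ be pairwise distinct points in the plane and let $\Gamma$ be a circle with centre $O$. Suppose that for every $r>0$ the quantity $\sum_{i=1}^n|PA_i|^{2n-2}$ is constant as $P$ ranges over the circle $\Gamma_r$ of radius $r$ centred at $O$ (the constant may depend on $r$). Then $A_1,\dots,A_n$ are the vertices of a regular $n$-gon inscribed in a circle centred at $O$.
   Context: $|PA|$ denotes Euclidean distance. For $n=2$ a "regular $2$-gon inscribed in a circle centred at $O$" means two distinct points symmetric with respect to $O$. *)

theory Defs
  imports Complex_Main
begin

text \<open>Points of the plane are modelled as complex numbers; the distance |PA| is cmod (P - A).\<close>

definition regular_ngon_centred :: "nat \<Rightarrow> (nat \<Rightarrow> complex) \<Rightarrow> complex \<Rightarrow> bool" where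
  "regular_ngon_centred n A C \<longleftrightarrow>
     (\<exists>R::real. R > 0 \<and> (\<exists>th::real.
        A ` {..<n} = {C + complex_of_real R * cis (th + 2 * pi * real k / real n) | k. k < n}))"

end

theory Submission imports Defs "HOL-Computational_Algebra.Polynomial" begin

lemma ngon_from_roots:
  fixes A :: "nat \<Rightarrow> complex"
  assumes n: "n \<ge> 2" and inj: "inj_on A {..<n}" and pw: "\<forall>j<n. (A j - C) ^ n = c"
  shows "regular_ngon_centred n A C"
proof -
  have n0: "n > 0" using n by simp
  have c0: "c \<noteq> 0"
  proof
    assume "c = 0"
    then have "A 0 = C" "A 1 = C" using pw n by auto
    then have "A 0 = A 1" by simp
    moreover have "(0::nat) \<noteq> 1" by simp
    ultimately show False using inj n unfolding inj_on_def by fastforce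
  qed
  define R where "R = root n (norm c)"
  define th where "th = Arg c / real n"
  define c' where "c' = root n (norm c) * cis (Arg c / n)"
  have R0: "R > 0" using c0 n0 by (simp add: R_def)
  have sub: "(\<lambda>j. A j - C) ` {..<n} \<subseteq> {z. z^n = c}" using pw by auto
  have injt: "inj_on (\<lambda>j. A j - C) {..<n}" using inj unfolding inj_on_def by auto
  have cardim: "card ((\<lambda>j. A j - C) ` {..<n}) = n" using card_image[OF injt] by simp
  have eq1: "(\<lambda>j. A j - C) ` {..<n} = {z. z^n = c}"
    by (rule card_subset_eq[OF finite_nth_roots[OF n0] sub]) (simp add: cardim card_nth_roots[OF c0 n0])
  have "{z. z^n = c} = (\<lambda>z. c' * z) ` {z. z ^ n = 1}"
    using bij_betw_imp_surj_on[OF bij_betw_nth_root_unity[OF c0 n0]] by (simp add: c'_def)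
  also have "{z::complex. z ^ n = 1} = (\<lambda>k. cis (2 * pi * real k / real n)) ` {..<n}"
    using bij_betw_imp_surj_on[OF bij_betw_roots_unity[OF n0]] by simp
  finally have eq2: "{z. z^n = c} = (\<lambda>k. R * cis (th + 2 * pi * real k / real n)) ` {..<n}"
    by (simp add: image_image c'_def R_def th_def mult.assoc cis_mult)
  have "A ` {..<n} = (\<lambda>z. C + z) ` ((\<lambda>j. A j - C) ` {..<n})"
    by (simp add: image_image)
  also have "\<dots> = (\<lambda>k. C + complex_of_real R * cis (th + 2 * pi * real k / real n)) ` {..<n}"
    unfolding eq1 eq2 by (simp add: image_image)
  also have "\<dots> = {C + complex_of_real R * cis (th + 2 * pi * real k / real n) | k. k < n}"
    by auto
  finally show ?thesis unfolding regular_ngon_centred_def using R0 by blast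
qed

lemma avg_poly:
  fixes a :: "nat \<Rightarrow> complex"
  assumes ps: "\<forall>k. 1 \<le> k \<longrightarrow> k < n \<longrightarrow> (\<Sum>i<n. a i ^ k) = 0"
    and d: "degree f < n"
  shows "(\<Sum>i<n. poly f (a i)) = of_nat n * poly f 0"
proof -
  have "(\<Sum>i<n. poly f (a i)) = (\<Sum>i<n. \<Sum>k\<le>degree f. coeff f k * a i ^ k)"
    by (simp add: poly_altdef)
  also have "\<dots> = (\<Sum>k\<le>degree f. coeff f k * (\<Sum>i<n. a i ^ k))"
    by (subst sum.swap) (simp add: sum_distrib_left)
  also have "\<dots> = coeff f 0 * of_nat n + (\<Sum>k<degree f. coeff f (Suc k) * (\<Sum>i<n. a i ^ Suc k))"
    by (simp add: sum.atMost_shift)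
  also have "(\<Sum>k<degree f. coeff f (Suc k) * (\<Sum>i<n. a i ^ Suc k)) = 0"
  proof (intro sum.neutral ballI)
    fix x assume "x \<in> {..<degree f}"
    then have "Suc x < n" using d by simp
    then have "(\<Sum>i<n. a i ^ Suc x) = 0" using ps[rule_format, of "Suc x"] by simp
    then show "coeff f (Suc x) * (\<Sum>i<n. a i ^ Suc x) = 0" by simp
  qed
  finally show ?thesis by (simp add: poly_0_coeff_0)
qed

lemma roots_from_psums:
  fixes a :: "nat \<Rightarrow> complex"
  assumes n: "n \<ge> 2" and inj: "inj_on a {..<n}"
    and ps: "\<forall>k. 1 \<le> k \<longrightarrow> k < n \<longrightarrow> (\<Sum>i<n. a i ^ k) = 0"
  shows "\<exists>c. \<forall>j<n. a j ^ n = c"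
proof -
  define Q where "Q = (\<Prod>i<n. [:- a i, 1:])"
  have degQ: "degree Q = n"
    unfolding Q_def by (subst degree_prod_eq_sum_degree) auto
  have lcQ: "coeff Q n = 1"
    using lead_coeff_prod[of "\<lambda>i. [:- a i, 1:]" "{..<n}"] degQ by (simp add: Q_def)
  have key: "a j * poly (pderiv Q) (a j) = - of_nat n * poly Q 0" if j: "j < n" for j
  proof -
    define L where "L = (\<Prod>i\<in>{..<n} - {j}. [:- a i, 1:])"
    have QL: "Q = [:- a j, 1:] * L"
      unfolding Q_def L_def using j by (simp add: prod.remove)
    have "degree L \<le> (\<Sum>i\<in>{..<n} - {j}. degree [:- a i, 1:])"
      unfolding L_def by (rule degree_prod_sum_le[unfolded comp_def]) simp
    also have "\<dots> = n - 1" using j by simp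
    finally have dL: "degree L < n" using n by simp
    have z: "poly L (a i) = 0" if "i < n" "i \<noteq> j" for i
      unfolding L_def poly_prod using that by (intro prod_zero) auto
    have "(\<Sum>i<n. poly L (a i)) = poly L (a j) + (\<Sum>i\<in>{..<n} - {j}. poly L (a i))"
      using j by (simp add: sum.remove)
    also have "(\<Sum>i\<in>{..<n} - {j}. poly L (a i)) = 0"
      using z by (intro sum.neutral) auto
    finally have "poly L (a j) = of_nat n * poly L 0"
      using avg_poly[OF ps dL] by simp
    moreover have "poly (pderiv Q) (a j) = poly L (a j)"
      unfolding QL pderiv_mult by (simp add: pderiv_pCons)
    moreover have "poly Q 0 = - a j * poly L 0" unfolding QL by simp
    ultimately show ?thesis by simp
  qed
  define T where "T = pCons 0 (pderiv Q) - smult (of_nat n) Q + [: of_nat n * coeff Q 0 :]"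
  have Troot: "poly T (a j) = 0" if "j < n" for j
  proof -
    have "poly Q (a j) = 0" unfolding Q_def poly_prod using that by (intro prod_zero) auto
    then show ?thesis using key[OF that] by (simp add: T_def poly_0_coeff_0)
  qed
  have cT: "coeff T (Suc k) = (of_nat (Suc k) - of_nat n) * coeff Q (Suc k)" for k
    by (simp add: T_def coeff_pderiv algebra_simps)
  have degT: "degree T \<le> n - 1"
  proof (rule degree_le, intro allI impI)
    fix i assume i: "n - 1 < i"
    then obtain k where k: "i = Suc k" using n by (cases i) auto
    show "coeff T i = 0"
    proof (cases "i = n")
      case True
      have "coeff T (Suc k) = (of_nat (Suc k) - of_nat n) * coeff Q (Suc k)" by (rule cT)
      then show ?thesis using k True by (simp only:) simp
    next
      case False then have "i > n" using i by simp
      then have "coeff Q i = 0" using degQ by (simp add: coeff_eq_0)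
      then show ?thesis using k cT by simp
    qed
  qed
  have T0: "T = 0"
  proof (rule ccontr)
    assume "T \<noteq> 0"
    then have fin: "finite {x. poly T x = 0}" and cb: "card {x. poly T x = 0} \<le> degree T"
      using poly_roots_finite card_poly_roots_bound by auto
    have "a ` {..<n} \<subseteq> {x. poly T x = 0}" using Troot by auto
    then have "card (a ` {..<n}) \<le> card {x. poly T x = 0}" using fin by (intro card_mono)
    moreover have "card (a ` {..<n}) = n" using card_image[OF inj] by simp
    ultimately show False using cb degT n by simp
  qed
  have cQ: "coeff Q k = 0" if kk: "1 \<le> k" "k < n" for k
  proof -
    obtain l where l: "k = Suc l" using kk by (cases k) auto
    have "(of_nat (Suc l) - of_nat n) * coeff Q (Suc l) = (0::complex)"
      using cT[of l] T0 by (simp only: coeff_0)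
    moreover have "of_nat (Suc l) \<noteq> (of_nat n :: complex)"
      using kk l by (simp only: of_nat_eq_iff)
    ultimately show ?thesis using l by simp
  qed
  have polyQ: "poly Q x = coeff Q 0 + x ^ n" for x
  proof -
    have "poly Q x = (\<Sum>k\<le>n. coeff Q k * x ^ k)" using degQ by (simp add: poly_altdef)
    also have "\<dots> = (\<Sum>k\<in>{0,n}. coeff Q k * x ^ k)"
    proof (rule sum.mono_neutral_right)
      show "\<forall>i\<in>{..n} - {0, n}. coeff Q i * x ^ i = 0"
      proof
        fix i assume "i \<in> {..n} - {0, n}"
        then have "1 \<le> i" "i < n" by auto
        then show "coeff Q i * x ^ i = 0" using cQ by simp
      qed
    qed auto
    also have "\<dots> = coeff Q 0 + x ^ n" using n lcQ by simp
    finally show ?thesis .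
  qed
  have "\<forall>j<n. a j ^ n = - coeff Q 0"
  proof (intro allI impI)
    fix j assume "j < n"
    have "poly Q (a j) = 0" unfolding Q_def poly_prod using \<open>j<n\<close> by (intro prod_zero) auto
    then show "a j ^ n = - coeff Q 0" using polyQ[of "a j"] by (simp add: add_eq_0_iff2)
  qed
  then show ?thesis by blast
qed

lemma poly_zero_if_infinite:
  fixes p :: "complex poly"
  assumes "infinite S" "\<forall>x\<in>S. poly p x = 0"
  shows "p = 0"
proof (rule ccontr)
  assume "p \<noteq> 0"
  then have "finite {x. poly p x = 0}" by (rule poly_roots_finite)
  moreover have "S \<subseteq> {x. poly p x = 0}" using assms by auto
  ultimately show False using assms finite_subset by blast
qed

lemma infinite_circle:
  assumes "(r::real) > 0"
  shows "infinite {z::complex. cmod z = r}"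
proof
  assume fin: "finite {z::complex. cmod z = r}"
  define f where "f = (\<lambda>x::real. Complex x (sqrt (r^2 - x^2)))"
  have inj: "inj_on f {-r<..<r}" unfolding inj_on_def f_def by simp
  have sub: "f ` {-r<..<r} \<subseteq> {z. cmod z = r}"
  proof
    fix z assume "z \<in> f ` {-r<..<r}"
    then obtain x where x: "-r < x" "x < r" "z = f x" by auto
    have "(r - x) * (r + x) > 0" using x by simp
    then have le: "x^2 \<le> r^2" by (simp add: power2_eq_square algebra_simps)
    have "cmod z = sqrt (x^2 + (r^2 - x^2))"
      using le by (simp add: x f_def cmod_def)
    also have "\<dots> = r" using assms by simp
    finally show "z \<in> {z. cmod z = r}" by simp
  qed
  have "infinite (f ` {-r<..<r})" using inj assms by (simp add: finite_image_iff)
  then show False using fin sub finite_subset by blast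
qed

lemma circle_identity:
  fixes a :: "nat \<Rightarrow> complex"
  assumes r: "r > 0" and z: "cmod z = r"
    and hs: "(\<Sum>i<n. cmod (z - a i) ^ (2 * m)) = c"
  shows "(\<Sum>i<n. (z - a i)^m * (of_real (r^2) - cnj (a i) * z)^m) = of_real c * z^m"
proof -
  have zc: "z * cnj z = of_real (r^2)" using complex_norm_square[of z] z by simp
  have each: "z^m * of_real (cmod (z - a i) ^ (2 * m)) = (z - a i)^m * (of_real (r^2) - cnj (a i) * z)^m" for i
  proof -
    have "of_real (cmod (z - a i) ^ (2 * m)) = (of_real ((cmod (z - a i))^2) :: complex) ^ m"
      by (simp add: power_mult)
    also have "\<dots> = ((z - a i) * cnj (z - a i)) ^ m" by (simp only: complex_norm_square)
    finally have "z^m * of_real (cmod (z - a i) ^ (2 * m)) = ((z - a i) * (z * cnj (z - a i)))^m"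
      by (simp add: power_mult_distrib mult_ac)
    also have "z * cnj (z - a i) = of_real (r^2) - cnj (a i) * z"
      using zc by (simp add: algebra_simps)
    finally show ?thesis by (simp add: power_mult_distrib)
  qed
  have "of_real c * z^m = z^m * of_real (\<Sum>i<n. cmod (z - a i) ^ (2 * m))" using hs by simp
  also have "\<dots> = (\<Sum>i<n. z^m * of_real (cmod (z - a i) ^ (2 * m)))"
    by (simp add: sum_distrib_left)
  also have "\<dots> = (\<Sum>i<n. (z - a i)^m * (of_real (r^2) - cnj (a i) * z)^m)"
    using each by simp
  finally show ?thesis by simp
qed

lemma extend_all_z:
  fixes a :: "nat \<Rightarrow> complex"
  assumes r: "r > 0"
    and h: "\<forall>z. cmod z = r \<longrightarrow> (\<Sum>i<n. (z - a i)^m * (of_real (r^2) - cnj (a i) * z)^m) = c * z^m"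
  shows "(\<Sum>i<n. (z - a i)^m * (of_real (r^2) - cnj (a i) * z)^m) = c * z^m"
proof -
  define p where "p = (\<Sum>i<n. [:- a i, 1:]^m * [:of_real (r^2), - cnj (a i):]^m) - monom c m"
  have ev: "poly p z = (\<Sum>i<n. (z - a i)^m * (of_real (r^2) - cnj (a i) * z)^m) - c * z^m" for z
    by (simp add: p_def poly_sum poly_monom algebra_simps)
  have "p = 0"
    by (rule poly_zero_if_infinite[OF infinite_circle[OF r]]) (use h ev in auto)
  then show ?thesis using ev[of z] by simp
qed

lemma leading_in_s:
  fixes a :: "nat \<Rightarrow> complex"
  assumes h: "\<forall>r>0. \<forall>z. (\<Sum>i<n. (z - a i)^m * (of_real (r^2) - cnj (a i) * z)^m)
                 = z^m * (\<Sum>i<n. (1 - a i)^m * (of_real (r^2) - cnj (a i))^m)"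
  shows "(\<Sum>i<n. (z - a i)^m) = z^m * (\<Sum>i<n. (1 - a i)^m)"
proof -
  define q where "q = (\<Sum>i<n. smult ((z - a i)^m) ([:- cnj (a i) * z, 1:]^m))
      - smult (z^m) (\<Sum>i<n. smult ((1 - a i)^m) ([:- cnj (a i), 1:]^m))"
  have ev: "poly q s = (\<Sum>i<n. (z - a i)^m * (s - cnj (a i) * z)^m)
      - z^m * (\<Sum>i<n. (1 - a i)^m * (s - cnj (a i))^m)" for s
    by (simp add: q_def poly_sum poly_diff)
  have "q = 0"
  proof (rule poly_zero_if_infinite)
    show "infinite (of_real ` {0::real<..} :: complex set)"
      using infinite_Ioi by (simp add: finite_image_iff inj_on_def)
    show "\<forall>x\<in>of_real ` {0<..}. poly q x = 0"
    proof
      fix x assume "x \<in> (of_real ` {0::real<..} :: complex set)"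
      then obtain t where t: "t > 0" "x = of_real t" by auto
      have "of_real ((sqrt t)^2) = x" using t by simp
      moreover have "sqrt t > 0" using t by simp
      ultimately have "(\<Sum>i<n. (z - a i)^m * (x - cnj (a i) * z)^m)
                 = z^m * (\<Sum>i<n. (1 - a i)^m * (x - cnj (a i))^m)"
        using h by blast
      then show "poly q x = 0" by (simp only: ev) simp
    qed
  qed
  then have "coeff q m = 0" by simp
  then show ?thesis
    by (simp add: q_def coeff_sum coeff_diff coeff_linear_power)
qed


lemma psums_from_identity:
  fixes a :: "nat \<Rightarrow> complex"
  assumes h: "\<forall>z. (\<Sum>i<n. (z - a i)^m) = z^m * K" and j: "1 \<le> j" "j \<le> m"
  shows "(\<Sum>i<n. a i ^ j) = 0"
proof -
  define cc where "cc k = of_nat (m choose k) * (\<Sum>i<n. (- a i)^(m - k)) - (if k = m then K else 0)" for k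
  have exp: "(\<Sum>i<n. (z - a i)^m) = (\<Sum>k\<le>m. (of_nat (m choose k) * (\<Sum>i<n. (- a i)^(m - k))) * z^k)" for z
  proof -
    have "(\<Sum>i<n. (z - a i)^m) = (\<Sum>i<n. \<Sum>k\<le>m. of_nat (m choose k) * z^k * (- a i)^(m - k))"
      by (intro sum.cong refl) (simp add: binomial_ring[of z "- a _" m, symmetric])
    also have "\<dots> = (\<Sum>k\<le>m. \<Sum>i<n. of_nat (m choose k) * z^k * (- a i)^(m - k))"
      by (rule sum.swap)
    also have "\<dots> = (\<Sum>k\<le>m. (of_nat (m choose k) * (\<Sum>i<n. (- a i)^(m - k))) * z^k)"
      by (intro sum.cong refl) (simp add: sum_distrib_left sum_distrib_right mult_ac)
    finally show ?thesis .
  qed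
  have "\<forall>z. (\<Sum>k\<le>m. cc k * z^k) = 0"
  proof
    fix z :: complex
    have "(\<Sum>k\<le>m. cc k * z^k) = (\<Sum>k\<le>m. (of_nat (m choose k) * (\<Sum>i<n. (- a i)^(m - k))) * z^k)
           - (\<Sum>k\<le>m. (if k = m then K * z^k else 0))"
    proof -
      have "(\<Sum>k\<le>m. cc k * z^k) = (\<Sum>k\<le>m. (of_nat (m choose k) * (\<Sum>i<n. (- a i)^(m - k))) * z^k
              - (if k = m then K * z^k else 0))"
        by (intro sum.cong refl) (simp add: cc_def left_diff_distrib)
      then show ?thesis by (simp only: sum_subtractf)
    qed
    also have "(\<Sum>k\<le>m. (if k = m then K * z^k else 0)) = K * z^m"
      by (simp add: sum.delta')
    finally show "(\<Sum>k\<le>m. cc k * z^k) = 0" using h exp[of z] by (simp add: mult.commute)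
  qed
  then have "\<forall>i\<le>m. cc i = 0" by (simp only: polyfun_eq_0)
  then have "cc (m - j) = 0" by simp
  moreover have "m - j \<noteq> m" using j by simp
  moreover have "m - (m - j) = j" using j by simp
  ultimately have "of_nat (m choose (m - j)) * (\<Sum>i<n. (- a i)^j) = (0::complex)"
    by (simp add: cc_def)
  moreover have "(of_nat (m choose (m - j)) :: complex) \<noteq> 0" using j by simp
  ultimately have "(\<Sum>i<n. (- a i)^j) = 0" by simp
  moreover have "(\<Sum>i<n. (- a i)^j) = (-1)^j * (\<Sum>i<n. a i ^ j)"
    unfolding sum_distrib_left by (intro sum.cong refl) (rule power_minus)
  ultimately have "(-1)^j * (\<Sum>i<n. a i ^ j) = 0" by simp
  then show ?thesis by simp
qed
theorem mainTheorem4: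
  fixes n :: nat and A :: "nat \<Rightarrow> complex" and C :: complex
  assumes "n \<ge> 2"
    and "inj_on A {..<n}"
    and "\<forall>r::real. r > 0 \<longrightarrow> (\<exists>c::real. \<forall>P::complex. cmod (P - C) = r \<longrightarrow>
            (\<Sum>i<n. cmod (P - A i) ^ (2 * n - 2)) = c)"
  shows "regular_ngon_centred n A C"
proof -
  define a where "a i = A i - C" for i
  define m where "m = n - 1"
  have nm: "2 * n - 2 = 2 * m" using assms(1) by (simp add: m_def)
  have S: "\<forall>r>0. \<forall>z. (\<Sum>i<n. (z - a i)^m * (of_real (r^2) - cnj (a i) * z)^m)
                 = z^m * (\<Sum>i<n. (1 - a i)^m * (of_real (r^2) - cnj (a i))^m)"
  proof (intro allI impI)
    fix r :: real and z assume r: "r > 0"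
    obtain c where c: "\<forall>P::complex. cmod (P - C) = r \<longrightarrow> (\<Sum>i<n. cmod (P - A i) ^ (2 * n - 2)) = c"
      using assms(3) r by blast
    have h: "\<forall>z. cmod z = r \<longrightarrow> (\<Sum>i<n. (z - a i)^m * (of_real (r^2) - cnj (a i) * z)^m) = of_real c * z^m"
    proof (intro allI impI)
      fix z :: complex assume z: "cmod z = r"
      have "(\<Sum>i<n. cmod ((z + C) - A i) ^ (2 * n - 2)) = c" using c z by simp
      then have "(\<Sum>i<n. cmod (z - a i) ^ (2 * n - 2)) = c" by (simp add: a_def algebra_simps)
      then have "(\<Sum>i<n. cmod (z - a i) ^ (2 * m)) = c" by (simp only: nm)
      then show "(\<Sum>i<n. (z - a i)^m * (of_real (r^2) - cnj (a i) * z)^m) = of_real c * z^m"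
        by (rule circle_identity[OF r z])
    qed
    have e: "\<And>w. (\<Sum>i<n. (w - a i)^m * (of_real (r^2) - cnj (a i) * w)^m) = of_real c * w^m"
      by (rule extend_all_z[OF r h])
    show "(\<Sum>i<n. (z - a i)^m * (of_real (r^2) - cnj (a i) * z)^m)
                 = z^m * (\<Sum>i<n. (1 - a i)^m * (of_real (r^2) - cnj (a i))^m)"
      using e[of z] e[of 1] by simp
  qed
  have id: "\<forall>z. (\<Sum>i<n. (z - a i)^m) = z^m * (\<Sum>i<n. (1 - a i)^m)"
    using leading_in_s[OF S] by blast
  have ps: "\<forall>k. 1 \<le> k \<longrightarrow> k < n \<longrightarrow> (\<Sum>i<n. a i ^ k) = 0"
    using psums_from_identity[OF id] by (auto simp: m_def)
  have inja: "inj_on a {..<n}" using assms(2) unfolding inj_on_def a_def by auto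
  obtain c where "\<forall>j<n. a j ^ n = c" using roots_from_psums[OF assms(1) inja ps] by blast
  then show ?thesis using ngon_from_roots[OF assms(1) assms(2)] unfolding a_def by blast
qed

end
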